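(* Let $n>m\geq 2$ and let $\mathbf{p}=(p_1,\ldots,p_n)$ be a probability vector with $p_1\geq\cdots\geq p_n\geq 0$. Let $\overline{\mathbf{q}}$ be the probability vector obtained from $\mathbf{p}$ by performing exactly $n-m$ Huffman merging steps, with ties broken arbitrarily. Then $$\mathtt{D}(\mathbf{p},\overline{\mathbf{q}})\leq\min_{\mathbf{q}}\mathtt{D}(\mathbf{p},\mathbf{q})+\alpha,\qquad \alpha=1-\frac{1+\ln(\ln 2)}{\ln 2}<0.08608,$$ where the minimum ranges over all probability vectors $\mathbf{q}=(q_1,\ldots,q_m)$ with $m$ components.
   Context: $H$ is Shannon entropy in bits. For probability vectors $\mathbf{p}$ (of length $n$) and $\mathbf{q}$ (of length $m$), $W(\mathbf{p},\mathbf{q})$ denotes the minimum entropy of a bivariate probability distribution (an $m\times n$ nonnegative matrix) whose marginals are $\mathbf{p}$ and $\mathbf{q}$. Then $$\mathtt{D}(\mathbf{p},\mathbf{q})=2W(\mathbf{p},\mathbf{q})-H(\mathbf{p})-H(\mathbf{q}),$$ which equals $\min\{H(X\mid Y)+H(Y\mid X)\}$ over all joint distributions of $(X,Y)$ with $X\sim\mathbf{p}$ and $Y\sim\mathbf{q}$. A Huffman merging step applied to a probability vector removes two smallest entries $x,y$, inserts the entry $x+y$, and re-sorts the vector in nonincreasing order. *)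

theory Defs
  imports Complex_Main
begin

definition prob_vec :: "real list \<Rightarrow> bool" where
  "prob_vec p \<longleftrightarrow> (\<forall>x\<in>set p. 0 \<le> x) \<and> sum_list p = 1"

definition ent_term :: "real \<Rightarrow> real" where
  "ent_term x = (if x = 0 then 0 else - x * log 2 x)"

definition H :: "real list \<Rightarrow> real" where
  "H p = sum_list (map ent_term p)"

definition coupling :: "real list \<Rightarrow> real list \<Rightarrow> (nat \<Rightarrow> nat \<Rightarrow> real) \<Rightarrow> bool" where
  "coupling p q M \<longleftrightarrow>
     (\<forall>i<length q. \<forall>j<length p. 0 \<le> M i j) \<and>
     (\<forall>i<length q. (\<Sum>j<length p. M i j) = q ! i) \<and>
     (\<forall>j<length p. (\<Sum>i<length q. M i j) = p ! j)"

definition mat_entropy :: "nat \<Rightarrow> nat \<Rightarrow> (nat \<Rightarrow> nat \<Rightarrow> real) \<Rightarrow> real" where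
  "mat_entropy m n M = (\<Sum>i<m. \<Sum>j<n. ent_term (M i j))"

(* minimum entropy coupling (the minimum is attained, so Inf = min) *)
definition W :: "real list \<Rightarrow> real list \<Rightarrow> real" where
  "W p q = Inf {mat_entropy (length q) (length p) M | M. coupling p q M}"

definition D :: "real list \<Rightarrow> real list \<Rightarrow> real" where
  "D p q = 2 * W p q - H p - H q"

(* The resulting vector does not depend on how
   ties are broken, so this is a function. *)
definition huffman_step :: "real list \<Rightarrow> real list" where
  "huffman_step xs = (let s = sort xs in rev (sort ((s ! 0 + s ! 1) # drop 2 s)))"

end

theory Submission
  imports Defs "HOL-Library.Multiset" "HOL-Combinatorics.Permutations"
begin


lemma exp_upper12:
  fixes x :: real assumes "0 \<le> x"
  shows "exp x * (1 - x^12 / fact 12) \<le> (\<Sum>m<12. x^m / fact m)"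
proof -
  obtain t where t: "\<bar>t\<bar> \<le> \<bar>x\<bar>" "exp x = (\<Sum>m<12. (x ^ m) / fact m) + (exp t / fact 12) * x ^ 12"
    using Maclaurin_exp_le[of x 12] by blast
  define r where "r = x^12 / fact 12"
  have r0: "0 \<le> r" using assms by (simp add: r_def)
  have "exp t \<le> exp x" using t(1) assms by simp
  hence "exp t * r \<le> exp x * r" using r0 by (rule mult_right_mono)
  moreover have "exp x = (\<Sum>m<12. (x ^ m) / fact m) + exp t * r" using t(2) by (simp add: r_def)
  ultimately have "exp x - exp x * r \<le> (\<Sum>m<12. (x ^ m) / fact m)" by linarith
  thus ?thesis by (simp add: r_def algebra_simps)
qed

lemma exp_lower10:
  fixes x :: real assumes "0 \<le> x"
  shows "(\<Sum>m<10. x^m / fact m) \<le> exp x"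
proof -
  obtain t where t: "\<bar>t\<bar> \<le> \<bar>x\<bar>" "exp x = (\<Sum>m<10. (x ^ m) / fact m) + (exp t / fact 10) * x ^ 10"
    using Maclaurin_exp_le[of x 10] by blast
  have "0 \<le> (exp t / fact 10) * x ^ 10" using assms by simp
  with t(2) show ?thesis by simp
qed

lemma ln2_lower: "(693147 / 10^6 :: real) \<le> ln 2"
proof -
  define x :: real where "x = 693147 / 10^6"
  have "exp x * (1 - x^12 / fact 12) \<le> (\<Sum>m<12. x^m / fact m)"
    by (rule exp_upper12) (simp add: x_def)
  moreover have "(\<Sum>m<12. x^m / fact m) < 2 * (1 - x^12 / fact 12)"
    by (simp add: x_def lessThan_Suc fact_numeral eval_nat_numeral)
  moreover have "0 < 1 - x^12 / fact 12" by (simp add: x_def fact_numeral eval_nat_numeral)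
  ultimately have "exp x * (1 - x^12 / fact 12) < 2 * (1 - x^12 / fact 12)" "0 < 1 - x^12 / fact 12"
    by linarith+
  hence "exp x < 2" by (simp only: mult_less_cancel_right_pos)
  hence "exp x < exp (ln 2)" by simp
  hence "x < ln 2" by (simp only: exp_less_cancel_iff)
  thus ?thesis by (simp add: x_def)
qed

lemma alpha_bounds: "0 \<le> 1 - (1 + ln (ln 2)) / ln (2::real)"
   "1 - (1 + ln (ln 2)) / ln (2::real) < 0.08608"
proof -
  have l2: "0 < ln (2::real)" by simp
  have l21: "ln (2::real) < 1" by (rule ln_2_less_1)
  have "ln (ln (2::real)) \<le> ln 2 - 1" using ln_le_minus_one[of "ln 2"] l2 by simp
  thus "0 \<le> 1 - (1 + ln (ln 2)) / ln (2::real)" using l2 by (simp add: field_simps)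
  define L0 :: real where "L0 = 693147 / 10^6"
  define v where "v = 91392/100000 * L0 - 1"
  have L0: "L0 \<le> ln 2" unfolding L0_def by (rule ln2_lower)
  have "(\<Sum>m<10. (-v)^m / fact m) \<le> exp (-v)" by (rule exp_lower10) (simp add: v_def L0_def)
  moreover have "1 / L0 < (\<Sum>m<10. (-v)^m / fact m)"
    by (simp add: v_def L0_def lessThan_Suc fact_numeral eval_nat_numeral)
  ultimately have "1 / L0 < exp (-v)" by simp
  moreover have "0 < L0" by (simp add: L0_def)
  ultimately have "exp v < L0" by (simp add: exp_minus field_simps)
  moreover have "0 < L0" by (simp add: L0_def)
  ultimately have "exp v < exp (ln L0)" by simp
  hence "v < ln L0" by (simp only: exp_less_cancel_iff)
  moreover have "ln (ln 2) - ln L0 \<ge> (ln 2 - L0) / ln 2"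
  proof -
    have L0p: "0 < L0" by (simp add: L0_def)
    have "ln (L0 / ln 2) \<le> L0 / ln 2 - 1" using L0p l2 by (intro ln_le_minus_one) simp
    hence "ln (ln 2) - ln L0 \<ge> 1 - L0/ln 2" using L0p l2 by (simp add: ln_div)
    moreover have "(ln 2 - L0) / ln 2 = 1 - L0/ln 2" using l2 by (simp add: diff_divide_distrib)
    ultimately show ?thesis by simp
  qed
  moreover have "(ln 2 - L0) / ln 2 \<ge> ln 2 - L0" using l2 l21 L0
    by (simp add: le_divide_eq mult_left_le)
  ultimately have "ln (ln 2) > 91392/100000 * ln (2::real) - 1" using L0 unfolding v_def by linarith
  thus "1 - (1 + ln (ln 2)) / ln (2::real) < 0.08608" using l2 by (simp add: field_simps)
qed


lemma ent_nonneg: "0 \<le> x \<Longrightarrow> x \<le> 1 \<Longrightarrow> 0 \<le> ent_term x"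
  unfolding ent_term_def by (auto simp: mult_nonneg_nonpos)

lemma ent_subadd:
  assumes "0 \<le> x" "0 \<le> y" shows "ent_term (x+y) \<le> ent_term x + ent_term y"
proof (cases "x = 0 \<or> y = 0")
  case True thus ?thesis using assms by (auto simp: ent_term_def)
next
  case False
  hence xy: "0 < x" "0 < y" using assms by auto
  have "log 2 x \<le> log 2 (x+y)" "log 2 y \<le> log 2 (x+y)" using xy by auto
  hence "x * log 2 x + y * log 2 y \<le> x * log 2 (x+y) + y * log 2 (x+y)"
    using xy by (intro add_mono mult_left_mono) auto
  thus ?thesis using xy by (simp add: ent_term_def algebra_simps)
qed

lemma ent_sum_le:
  assumes "finite A" "\<And>a. a \<in> A \<Longrightarrow> 0 \<le> f a"
  shows "ent_term (sum f A) \<le> (\<Sum>a\<in>A. ent_term (f a))"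
  using assms
proof (induction A rule: finite_induct)
  case empty thus ?case by (simp add: ent_term_def)
next
  case (insert a A)
  have "ent_term (sum f (insert a A)) = ent_term (f a + sum f A)" using insert by simp
  also have "\<dots> \<le> ent_term (f a) + ent_term (sum f A)"
    using insert by (intro ent_subadd sum_nonneg) auto
  also have "\<dots> \<le> ent_term (f a) + (\<Sum>a\<in>A. ent_term (f a))" using insert by auto
  finally show ?case using insert by simp
qed

lemma ent_scale:
  assumes "0 \<le> c" "0 \<le> x" shows "ent_term (c*x) = c * ent_term x - c * x * log 2 c"
proof (cases "c = 0 \<or> x = 0")
  case True thus ?thesis by (auto simp: ent_term_def)
next
  case False
  hence "0 < c" "0 < x" using assms by auto
  thus ?thesis by (simp add: ent_term_def log_mult algebra_simps)
qed

lemma ent_tangent: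
  assumes "0 \<le> x" "0 < y" shows "ent_term x \<le> - x * log 2 y + (y - x) / ln 2"
proof (cases "x = 0")
  case True thus ?thesis using assms by (simp add: ent_term_def)
next
  case False
  hence x: "0 < x" using assms by auto
  have "ln (y/x) \<le> y/x - 1" using x assms by (intro ln_le_minus_one) simp
  hence "x * ln (y/x) \<le> x * (y/x - 1)" using x by (intro mult_left_mono) auto
  hence "x * (ln y - ln x) \<le> y - x" using x assms by (simp add: ln_div algebra_simps)
  hence "x * (ln y - ln x) / ln 2 \<le> (y - x) / ln 2" by (simp add: divide_right_mono)
  thus ?thesis using x by (simp add: ent_term_def log_def algebra_simps diff_divide_distrib)
qed

definition kk :: "real \<Rightarrow> real \<Rightarrow> real" where "kk x X = ent_term x + x * log 2 X"

lemma logsum: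
  assumes "0 \<le> x" "0 \<le> y" "0 \<le> X" "0 \<le> Y" "0 < x \<Longrightarrow> 0 < X" "0 < y \<Longrightarrow> 0 < Y"
  shows "kk x X + kk y Y \<le> kk (x+y) (X+Y)"
proof -
  consider "x = 0" | "y = 0" | "0 < x" "0 < y" using assms by linarith
  then show ?thesis
  proof cases
    case 1
    show ?thesis
    proof (cases "y = 0")
      case True thus ?thesis using 1 by (simp add: kk_def ent_term_def)
    next
      case False
      hence "0 < y" "0 < Y" using assms by auto
      hence "log 2 Y \<le> log 2 (X+Y)" using assms by simp
      hence "y * log 2 Y \<le> y * log 2 (X+Y)" using assms by (intro mult_left_mono) auto
      thus ?thesis using 1 by (simp add: kk_def ent_term_def)
    qed
  next
    case 2
    show ?thesis
    proof (cases "x = 0")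
      case True thus ?thesis using 2 by (simp add: kk_def ent_term_def)
    next
      case False
      hence "0 < x" "0 < X" using assms by auto
      hence "log 2 X \<le> log 2 (X+Y)" using assms by simp
      hence "x * log 2 X \<le> x * log 2 (X+Y)" using assms by (intro mult_left_mono) auto
      thus ?thesis using 2 by (simp add: kk_def ent_term_def)
    qed
  next
    case 3
    have X: "0 < X" and Y: "0 < Y" using 3 assms by auto
    have a: "ln ((x*(X+Y))/(X*(x+y))) \<ge> 1 - (X*(x+y))/(x*(X+Y))"
    proof -
      have "ln ((X*(x+y))/(x*(X+Y))) \<le> (X*(x+y))/(x*(X+Y)) - 1"
        using 3 X Y by (intro ln_le_minus_one) (simp add: divide_pos_pos)
      moreover have "ln ((X*(x+y))/(x*(X+Y))) = - ln ((x*(X+Y))/(X*(x+y)))"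
        using 3 X Y by (simp add: ln_div)
      ultimately show ?thesis by simp
    qed
    have b: "ln ((y*(X+Y))/(Y*(x+y))) \<ge> 1 - (Y*(x+y))/(y*(X+Y))"
    proof -
      have "ln ((Y*(x+y))/(y*(X+Y))) \<le> (Y*(x+y))/(y*(X+Y)) - 1"
        using 3 X Y by (intro ln_le_minus_one) (simp add: divide_pos_pos)
      moreover have "ln ((Y*(x+y))/(y*(X+Y))) = - ln ((y*(X+Y))/(Y*(x+y)))"
        using 3 X Y by (simp add: ln_div)
      ultimately show ?thesis by simp
    qed
    have "x * (1 - (X*(x+y))/(x*(X+Y))) + y * (1 - (Y*(x+y))/(y*(X+Y))) = 0"
    proof -
      have "x * ((X*(x+y))/(x*(X+Y))) = X*(x+y)/(X+Y)" using 3 by simp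
      hence e1: "x * (1 - (X*(x+y))/(x*(X+Y))) = x - X*(x+y)/(X+Y)" by (simp add: right_diff_distrib)
      have "y * ((Y*(x+y))/(y*(X+Y))) = Y*(x+y)/(X+Y)" using 3 by simp
      hence e2: "y * (1 - (Y*(x+y))/(y*(X+Y))) = y - Y*(x+y)/(X+Y)" by (simp add: right_diff_distrib)
      have "X*(x+y)/(X+Y) + Y*(x+y)/(X+Y) = ((X+Y)*(x+y))/(X+Y)" by (simp add: add_divide_distrib distrib_right)
      also have "\<dots> = x + y" using X Y by simp
      finally have "X*(x+y)/(X+Y) + Y*(x+y)/(X+Y) = x + y" .
      thus ?thesis using e1 e2 by linarith
    qed
    moreover have "x * (1 - (X*(x+y))/(x*(X+Y))) \<le> x * ln ((x*(X+Y))/(X*(x+y)))"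
      using a 3 by (intro mult_left_mono) auto
    moreover have "y * (1 - (Y*(x+y))/(y*(X+Y))) \<le> y * ln ((y*(X+Y))/(Y*(x+y)))"
      using b 3 by (intro mult_left_mono) auto
    ultimately have c: "0 \<le> x * ln ((x*(X+Y))/(X*(x+y))) + y * ln ((y*(X+Y))/(Y*(x+y)))" by linarith
    have "x * ln ((x*(X+Y))/(X*(x+y))) + y * ln ((y*(X+Y))/(Y*(x+y)))
       = (x * ln x - x * ln X) + (y * ln y - y * ln Y) - ((x+y) * ln (x+y) - (x+y) * ln (X+Y))"
    proof -
      have l1: "ln ((x*(X+Y))/(X*(x+y))) = (ln x + ln (X+Y)) - (ln X + ln (x+y))"
      proof -
        have p: "x*(X+Y) \<noteq> 0" "X*(x+y) \<noteq> 0" "x \<noteq> 0" "X+Y \<noteq> 0" "X \<noteq> 0" "x+y \<noteq> 0"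
          using 3 X Y by auto
        show ?thesis by (simp only: ln_div ln_mult p simp_thms if_True)
      qed
      have l2: "ln ((y*(X+Y))/(Y*(x+y))) = (ln y + ln (X+Y)) - (ln Y + ln (x+y))"
      proof -
        have p: "y*(X+Y) \<noteq> 0" "Y*(x+y) \<noteq> 0" "y \<noteq> 0" "X+Y \<noteq> 0" "Y \<noteq> 0" "x+y \<noteq> 0"
          using 3 X Y by auto
        show ?thesis by (simp only: ln_div ln_mult p simp_thms if_True)
      qed
      show ?thesis unfolding l1 l2 by (simp add: algebra_simps)
    qed
    with c have "(x+y) * ln (x+y) - (x+y) * ln (X+Y) \<le> (x * ln x - x * ln X) + (y * ln y - y * ln Y)"
      by linarith
    hence "((x+y) * ln (x+y) - (x+y) * ln (X+Y)) / ln 2 \<le> ((x * ln x - x * ln X) + (y * ln y - y * ln Y)) / ln 2"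
      by (simp add: divide_right_mono)
    thus ?thesis using 3 X Y
      by (simp add: kk_def ent_term_def log_def algebra_simps add_divide_distrib diff_divide_distrib)
  qed
qed


definition Gf :: "nat \<Rightarrow> (nat \<Rightarrow> real) \<Rightarrow> real" where
  "Gf n v = (\<Sum>j<n. ent_term (v j)) - ent_term (\<Sum>j<n. v j)"

lemma ent_self_log: "0 \<le> U \<Longrightarrow> ent_term U + U * log 2 U = 0"
  by (cases "U = 0") (auto simp: ent_term_def)

lemma Gf_kk:
  assumes "\<And>j. j < n \<Longrightarrow> 0 \<le> v j"
  shows "Gf n v = (\<Sum>j<n. kk (v j) (\<Sum>j<n. v j))"
proof -
  define U where "U = (\<Sum>j<n. v j)"
  have U0: "0 \<le> U" unfolding U_def using assms by (intro sum_nonneg) auto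
  have "(\<Sum>j<n. kk (v j) U) = (\<Sum>j<n. ent_term (v j)) + U * log 2 U"
    by (simp add: kk_def sum.distrib U_def sum_distrib_right)
  also have "\<dots> = (\<Sum>j<n. ent_term (v j)) - ent_term U" using ent_self_log[OF U0] by linarith
  finally show ?thesis by (simp add: Gf_def U_def)
qed

lemma Gf_superadd:
  assumes "\<And>j. j < n \<Longrightarrow> 0 \<le> u j" "\<And>j. j < n \<Longrightarrow> 0 \<le> v j"
  shows "Gf n u + Gf n v \<le> Gf n (\<lambda>j. u j + v j)"
proof -
  define U where "U = (\<Sum>j<n. u j)"
  define V where "V = (\<Sum>j<n. v j)"
  have U0: "0 \<le> U" unfolding U_def using assms by (intro sum_nonneg) auto
  have V0: "0 \<le> V" unfolding V_def using assms by (intro sum_nonneg) auto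
  have uU: "u j \<le> U" if "j < n" for j
    unfolding U_def using assms that by (intro member_le_sum) auto
  have vV: "v j \<le> V" if "j < n" for j
    unfolding V_def using assms that by (intro member_le_sum) auto
  have "Gf n u + Gf n v = (\<Sum>j<n. kk (u j) U + kk (v j) V)"
    using assms by (simp add: Gf_kk U_def V_def sum.distrib)
  also have "\<dots> \<le> (\<Sum>j<n. kk (u j + v j) (U + V))"
  proof (rule sum_mono)
    fix j assume "j \<in> {..<n}"
    hence j: "j < n" by simp
    show "kk (u j) U + kk (v j) V \<le> kk (u j + v j) (U + V)"
      using assms[OF j] U0 V0 uU[OF j] vV[OF j] by (intro logsum) auto
  qed
  also have "\<dots> = Gf n (\<lambda>j. u j + v j)"
    using assms by (subst Gf_kk) (auto simp: U_def V_def sum.distrib intro: add_nonneg_nonneg)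
  finally show ?thesis .
qed

lemma Gf_homog:
  assumes "0 \<le> c" "\<And>j. j < n \<Longrightarrow> 0 \<le> v j"
  shows "Gf n (\<lambda>j. c * v j) = c * Gf n v"
proof -
  have "(\<Sum>j<n. ent_term (c * v j)) = (\<Sum>j<n. c * ent_term (v j) - c * v j * log 2 c)"
    using assms by (intro sum.cong refl ent_scale) auto
  also have "\<dots> = c * (\<Sum>j<n. ent_term (v j)) - c * (\<Sum>j<n. v j) * log 2 c"
    by (simp add: sum_subtractf sum_distrib_left sum_distrib_right mult.assoc)
  finally have a: "(\<Sum>j<n. ent_term (c * v j)) = c * (\<Sum>j<n. ent_term (v j)) - c * (\<Sum>j<n. v j) * log 2 c" .
  have b: "ent_term (\<Sum>j<n. c * v j) = c * ent_term (\<Sum>j<n. v j) - c * (\<Sum>j<n. v j) * log 2 c"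
  proof -
    have "0 \<le> (\<Sum>j<n. v j)" using assms by (intro sum_nonneg) auto
    thus ?thesis using assms(1) by (simp add: sum_distrib_left[symmetric] ent_scale)
  qed
  show ?thesis unfolding Gf_def a b by (simp add: algebra_simps)
qed

lemma Gf_concave:
  assumes "0 \<le> l" "l \<le> 1" "\<And>j. j < n \<Longrightarrow> 0 \<le> u j" "\<And>j. j < n \<Longrightarrow> 0 \<le> v j"
  shows "l * Gf n u + (1 - l) * Gf n v \<le> Gf n (\<lambda>j. l * u j + (1 - l) * v j)"
proof -
  have "l * Gf n u + (1 - l) * Gf n v = Gf n (\<lambda>j. l * u j) + Gf n (\<lambda>j. (1-l) * v j)"
    using assms by (simp add: Gf_homog)
  also have "\<dots> \<le> Gf n (\<lambda>j. l * u j + (1 - l) * v j)"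
    using assms by (intro Gf_superadd) auto
  finally show ?thesis .
qed


definition phi :: "nat \<Rightarrow> nat \<Rightarrow> (nat \<Rightarrow> nat \<Rightarrow> real) \<Rightarrow> real" where
  "phi m n M = (\<Sum>i<m. Gf n (M i))"

definition nz :: "nat \<Rightarrow> nat \<Rightarrow> (nat \<Rightarrow> nat \<Rightarrow> real) \<Rightarrow> (nat \<times> nat) set" where
  "nz m n M = {(i,j). i < m \<and> j < n \<and> M i j \<noteq> 0}"

lemma finite_nz: "finite (nz m n M)"
  by (rule finite_subset[of _ "{..<m} \<times> {..<n}"]) (auto simp: nz_def)

lemma ent_if0: "ent_term (if b then a else 0) = (if b then ent_term a else 0)"
  by (simp add: ent_term_def)

lemma phi_det:
  assumes "\<And>i j. i < m \<Longrightarrow> j < n \<Longrightarrow> M i j = (if \<sigma> j = i then pp j else 0)"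
    and "\<And>j. j < n \<Longrightarrow> \<sigma> j < m"
  shows "phi m n M = (\<Sum>j<n. ent_term (pp j)) - (\<Sum>i<m. ent_term (\<Sum>j\<in>{j\<in>{..<n}. \<sigma> j = i}. pp j))"
proof -
  have r: "(\<Sum>j<n. M i j) = (\<Sum>j\<in>{j\<in>{..<n}. \<sigma> j = i}. pp j)" if "i < m" for i
  proof -
    have "(\<Sum>j<n. M i j) = (\<Sum>j<n. if \<sigma> j = i then pp j else 0)"
      using assms(1)[OF that] by (intro sum.cong) auto
    also have "\<dots> = (\<Sum>j\<in>{j\<in>{..<n}. \<sigma> j = i}. pp j)" by (rule sum.inter_filter[symmetric]) simp
    finally show ?thesis .
  qed
  have "(\<Sum>i<m. \<Sum>j<n. ent_term (M i j)) = (\<Sum>i<m. \<Sum>j<n. if \<sigma> j = i then ent_term (pp j) else 0)"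
    using assms(1) by (intro sum.cong refl) (simp add: ent_if0)
  also have "\<dots> = (\<Sum>j<n. \<Sum>i<m. if \<sigma> j = i then ent_term (pp j) else 0)" by (rule sum.swap)
  also have "\<dots> = (\<Sum>j<n. ent_term (pp j))" using assms(2) by (intro sum.cong refl) simp
  finally have a: "(\<Sum>i<m. \<Sum>j<n. ent_term (M i j)) = (\<Sum>j<n. ent_term (pp j))" .
  have "phi m n M = (\<Sum>i<m. \<Sum>j<n. ent_term (M i j)) - (\<Sum>i<m. ent_term (\<Sum>j<n. M i j))"
    by (simp add: phi_def Gf_def sum_subtractf)
  also have "(\<Sum>i<m. ent_term (\<Sum>j<n. M i j)) = (\<Sum>i<m. ent_term (\<Sum>j\<in>{j\<in>{..<n}. \<sigma> j = i}. pp j))"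
    using r by (intro sum.cong refl) simp
  finally show ?thesis using a by simp
qed

lemma sum_if_conj: "i0 < (m::nat) \<Longrightarrow> (\<Sum>i<m. if P \<and> i = i0 then c else 0) = (if P then c else (0::real))"
  by (cases P) (auto simp: sum.delta')

lemma vertex_aux:
  assumes "0 < m"
  shows "\<forall>M. card (nz m n M) = N \<longrightarrow> (\<forall>i<m. \<forall>j<n. 0 \<le> M i j) \<longrightarrow> (\<forall>j<n. (\<Sum>i<m. M i j) = pp j) \<longrightarrow>
    (\<exists>\<sigma>. (\<forall>j<n. \<sigma> j < m) \<and>
      (\<Sum>j<n. ent_term (pp j)) - (\<Sum>i<m. ent_term (\<Sum>j\<in>{j\<in>{..<n}. \<sigma> j = i}. pp j)) \<le> phi m n M)"
proof (induction N rule: less_induct)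
  case (less N)
  show ?case
  proof (intro allI impI)
    fix M :: "nat \<Rightarrow> nat \<Rightarrow> real"
    assume cN: "card (nz m n M) = N" and nn: "\<forall>i<m. \<forall>j<n. 0 \<le> M i j"
      and cs: "\<forall>j<n. (\<Sum>i<m. M i j) = pp j"
    show "\<exists>\<sigma>. (\<forall>j<n. \<sigma> j < m) \<and>
      (\<Sum>j<n. ent_term (pp j)) - (\<Sum>i<m. ent_term (\<Sum>j\<in>{j\<in>{..<n}. \<sigma> j = i}. pp j)) \<le> phi m n M"
    proof (cases "\<forall>j<n. \<forall>i1<m. \<forall>i2<m. M i1 j \<noteq> 0 \<longrightarrow> M i2 j \<noteq> 0 \<longrightarrow> i1 = i2")
      case True
      define \<sigma> where "\<sigma> j = (if \<exists>i<m. M i j \<noteq> 0 then (SOME i. i<m \<and> M i j \<noteq> 0) else 0)" for j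
      have sm: "\<sigma> j < m" for j
      proof (cases "\<exists>i<m. M i j \<noteq> 0")
        case True thus ?thesis unfolding \<sigma>_def by simp (metis (mono_tags, lifting) someI_ex)
      next
        case False thus ?thesis unfolding \<sigma>_def using assms by auto
      qed
      have det: "M i j = (if \<sigma> j = i then pp j else 0)" if ij: "i < m" "j < n" for i j
      proof (cases "\<exists>i<m. M i j \<noteq> 0")
        case ex: True
        define i0 where "i0 = (SOME i. i<m \<and> M i j \<noteq> 0)"
        have i0: "i0 < m" "M i0 j \<noteq> 0" using someI_ex[OF ex] unfolding i0_def by auto
        have sj: "\<sigma> j = i0" using ex by (simp add: \<sigma>_def i0_def)
        have z: "M i' j = 0" if "i' < m" "i' \<noteq> i0" for i'
          using True ij(2) i0 that by blast
        have "pp j = (\<Sum>i'<m. M i' j)" using cs ij(2) by simp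
        also have "\<dots> = (\<Sum>i'<m. if i' = i0 then M i0 j else 0)"
          using z by (intro sum.cong refl) auto
        also have "\<dots> = M i0 j" using i0 by simp
        finally have "pp j = M i0 j" .
        thus ?thesis using sj z ij by auto
      next
        case False
        hence "\<forall>i'<m. M i' j = 0" by auto
        hence "pp j = 0" using cs ij(2) by (metis (no_types, lifting) lessThan_iff sum.neutral)
        thus ?thesis using False ij by auto
      qed
      show ?thesis
        by (rule exI[of _ \<sigma>]) (use sm phi_det[of m n M \<sigma> pp] det in auto)
    next
      case False
      then obtain j i1 i2 where j: "j < n" and i1: "i1 < m" and i2: "i2 < m"
        and m1: "M i1 j \<noteq> 0" and m2: "M i2 j \<noteq> 0" and ne: "i1 \<noteq> i2" by blast
      define x1 where "x1 = M i1 j"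
      define x2 where "x2 = M i2 j"
      have x1: "0 < x1" using nn i1 j m1 unfolding x1_def by force
      have x2: "0 < x2" using nn i2 j m2 unfolding x2_def by force
      define M1 where "M1 = (\<lambda>i j'. M i j' + (if j' = j \<and> i = i1 then x2 else 0) - (if j' = j \<and> i = i2 then x2 else 0))"
      define M2 where "M2 = (\<lambda>i j'. M i j' + (if j' = j \<and> i = i2 then x1 else 0) - (if j' = j \<and> i = i1 then x1 else 0))"
      have nn1: "\<forall>i<m. \<forall>j<n. 0 \<le> M1 i j"
        using nn x1 x2 ne unfolding M1_def x2_def by auto
      have nn2: "\<forall>i<m. \<forall>j<n. 0 \<le> M2 i j"
        using nn x1 x2 ne unfolding M2_def x1_def by auto
      have cs1: "\<forall>j<n. (\<Sum>i<m. M1 i j) = pp j"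
        using cs i1 i2 unfolding M1_def by (auto simp: sum.distrib sum_subtractf sum_if_conj)
      have cs2: "\<forall>j<n. (\<Sum>i<m. M2 i j) = pp j"
        using cs i1 i2 unfolding M2_def by (auto simp: sum.distrib sum_subtractf sum_if_conj)
      have in2: "(i2, j) \<in> nz m n M" using i2 j m2 by (simp add: nz_def)
      have in1: "(i1, j) \<in> nz m n M" using i1 j m1 by (simp add: nz_def)
      have sub1: "nz m n M1 \<subseteq> nz m n M - {(i2, j)}"
        using ne x1 x2 unfolding nz_def M1_def x1_def x2_def by auto
      have sub2: "nz m n M2 \<subseteq> nz m n M - {(i1, j)}"
        using ne x1 x2 unfolding nz_def M2_def x1_def x2_def by auto
      have lt1: "card (nz m n M1) < N"
      proof -
        have "card (nz m n M1) \<le> card (nz m n M - {(i2,j)})" by (rule card_mono) (use finite_nz sub1 in auto)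
        moreover have "card (nz m n M - {(i2,j)}) < card (nz m n M)" by (rule card_Diff1_less[OF finite_nz in2])
        ultimately show ?thesis using cN by linarith
      qed
      have lt2: "card (nz m n M2) < N"
      proof -
        have "card (nz m n M2) \<le> card (nz m n M - {(i1,j)})" by (rule card_mono) (use finite_nz sub2 in auto)
        moreover have "card (nz m n M - {(i1,j)}) < card (nz m n M)" by (rule card_Diff1_less[OF finite_nz in1])
        ultimately show ?thesis using cN by linarith
      qed
      obtain \<sigma>1 where s1: "\<forall>j<n. \<sigma>1 j < m"
        "(\<Sum>j<n. ent_term (pp j)) - (\<Sum>i<m. ent_term (\<Sum>j\<in>{j\<in>{..<n}. \<sigma>1 j = i}. pp j)) \<le> phi m n M1"
        using less.IH[OF lt1] nn1 cs1 by blast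
      obtain \<sigma>2 where s2: "\<forall>j<n. \<sigma>2 j < m"
        "(\<Sum>j<n. ent_term (pp j)) - (\<Sum>i<m. ent_term (\<Sum>j\<in>{j\<in>{..<n}. \<sigma>2 j = i}. pp j)) \<le> phi m n M2"
        using less.IH[OF lt2] nn2 cs2 by blast
      define l where "l = x1 / (x1 + x2)"
      have l: "0 \<le> l" "l \<le> 1" using x1 x2 by (auto simp: l_def)
      have conv: "M i = (\<lambda>j'. l * M1 i j' + (1 - l) * M2 i j')" for i
      proof
        fix j'
        have e: "1 - l = x2 / (x1 + x2)" using x1 x2 by (simp add: l_def field_simps)
        have "l * x2 = x1 * x2 / (x1 + x2)" by (simp add: l_def)
        moreover have "(1 - l) * x1 = x1 * x2 / (x1 + x2)" by (simp add: e)
        ultimately have "l * x2 = (1 - l) * x1" by simp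
        thus "M i j' = l * M1 i j' + (1 - l) * M2 i j'"
          unfolding M1_def M2_def using ne by (auto simp: algebra_simps)
      qed
      have "l * phi m n M1 + (1 - l) * phi m n M2 = (\<Sum>i<m. l * Gf n (M1 i) + (1-l) * Gf n (M2 i))"
        by (simp add: phi_def sum.distrib sum_distrib_left)
      also have "\<dots> \<le> (\<Sum>i<m. Gf n (\<lambda>j'. l * M1 i j' + (1 - l) * M2 i j'))"
        using nn1 nn2 l by (intro sum_mono Gf_concave) auto
      also have "\<dots> = phi m n M" unfolding phi_def using conv by simp
      finally have cv: "l * phi m n M1 + (1 - l) * phi m n M2 \<le> phi m n M" .
      show ?thesis
      proof (cases "phi m n M1 \<le> phi m n M2")
        case True
        hence "(1-l) * phi m n M1 \<le> (1-l) * phi m n M2" using l by (intro mult_left_mono) auto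
        moreover have "phi m n M1 = l * phi m n M1 + (1-l) * phi m n M1" by (simp add: algebra_simps)
        ultimately have "phi m n M1 \<le> phi m n M" using cv by linarith
        thus ?thesis using s1 by (intro exI[of _ \<sigma>1]) auto
      next
        case False
        hence "l * phi m n M2 \<le> l * phi m n M1" using l by (intro mult_left_mono) auto
        moreover have "phi m n M2 = l * phi m n M2 + (1-l) * phi m n M2" by (simp add: algebra_simps)
        ultimately have "phi m n M2 \<le> phi m n M" using cv by linarith
        thus ?thesis using s2 by (intro exI[of _ \<sigma>2]) auto
      qed
    qed
  qed
qed



lemma merge_loss:
  assumes "finite T" "T \<noteq> {}" "0 < \<mu>" "\<And>j. j \<in> T \<Longrightarrow> \<mu> \<le> p j"
  shows "ent_term (sum p T) \<le> (\<Sum>j\<in>T. ent_term (p j)) - (real (card T) - 1) * \<mu> / ln 2"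
proof -
  define P where "P = sum p T"
  have pj: "0 < p j" if "j \<in> T" for j using assms(3) assms(4)[OF that] by linarith
  have P: "0 < P" unfolding P_def using assms pj by (intro sum_pos) auto
  have PPj: "(real (card T) - 1) * \<mu> \<le> P - p j" if j: "j \<in> T" for j
  proof -
    have "P - p j = sum p (T - {j})" unfolding P_def using sum.remove[OF assms(1) j, of p] by linarith
    moreover have "real (card (T - {j})) * \<mu> \<le> sum p (T - {j})"
    proof (rule sum_bounded_below)
      fix i assume "i \<in> T - {j}"
      hence "i \<in> T" by simp
      thus "\<mu> \<le> p i" by (rule assms(4))
    qed
    moreover have "real (card (T - {j})) = real (card T) - 1"
    proof -
      have "card T \<noteq> 0" using assms(1) j by auto
      hence "1 \<le> card T" by simp
      thus ?thesis using assms(1) j by (simp add: card_Diff_singleton of_nat_diff)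
    qed
    ultimately show ?thesis by simp
  qed
  have key: "p j * (1 - p j / P) \<le> p j * ln (P / p j)" if j: "j \<in> T" for j
  proof -
    have "ln (p j / P) \<le> p j / P - 1" using pj[OF j] P by (intro ln_le_minus_one) simp
    moreover have "ln (p j / P) = - ln (P / p j)" using pj[OF j] P by (simp add: ln_div)
    ultimately have "1 - p j / P \<le> ln (P / p j)" by simp
    thus ?thesis using pj[OF j] by (intro mult_left_mono) auto
  qed
  have lower: "p j * ((real (card T) - 1) * \<mu>) / P \<le> p j * (1 - p j / P)" if j: "j \<in> T" for j
  proof -
    have "p j * ((real (card T) - 1) * \<mu>) \<le> p j * (P - p j)"
      using PPj[OF j] pj[OF j] by (intro mult_left_mono) auto
    hence "p j * ((real (card T) - 1) * \<mu>) / P \<le> p j * (P - p j) / P"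
      using P by (intro divide_right_mono) auto
    also have "\<dots> = p j * (1 - p j / P)" using P by (simp add: field_simps)
    finally show ?thesis .
  qed
  have "(\<Sum>j\<in>T. p j * ((real (card T) - 1) * \<mu>) / P) = P * ((real (card T) - 1) * \<mu>) / P"
    unfolding P_def by (simp add: sum_divide_distrib sum_distrib_right)
  hence "(real (card T) - 1) * \<mu> = (\<Sum>j\<in>T. p j * ((real (card T) - 1) * \<mu>) / P)"
    using P by simp
  also have "\<dots> \<le> (\<Sum>j\<in>T. p j * ln (P / p j))"
    using lower key by (intro sum_mono) (meson order_trans)
  finally have A: "(real (card T) - 1) * \<mu> \<le> (\<Sum>j\<in>T. p j * ln (P / p j))" .
  have "(\<Sum>j\<in>T. ent_term (p j)) - ent_term P = (\<Sum>j\<in>T. p j * (log 2 P - log 2 (p j)))"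
  proof -
    have "ent_term P = (\<Sum>j\<in>T. - p j * log 2 P)" using P
      by (simp add: ent_term_def P_def sum_distrib_right sum_negf)
    moreover have "(\<Sum>j\<in>T. ent_term (p j)) = (\<Sum>j\<in>T. - p j * log 2 (p j))"
      using pj by (intro sum.cong) (auto simp: ent_term_def)
    ultimately show ?thesis by (simp add: sum_subtractf[symmetric] algebra_simps)
  qed
  also have "\<dots> = (\<Sum>j\<in>T. p j * ln (P / p j)) / ln 2"
    unfolding sum_divide_distrib using pj P by (intro sum.cong refl) (simp add: log_def ln_div diff_divide_distrib right_diff_distrib)
  finally have B: "(\<Sum>j\<in>T. ent_term (p j)) - ent_term P = (\<Sum>j\<in>T. p j * ln (P / p j)) / ln 2" .
  have "(real (card T) - 1) * \<mu> / ln 2 \<le> (\<Sum>j\<in>T. p j * ln (P / p j)) / ln 2"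
    using A by (intro divide_right_mono) auto
  thus ?thesis using B unfolding P_def by linarith
qed

lemma block_bound:
  assumes "finite T" "0 < avg" "\<And>j. j \<in> T \<Longrightarrow> avg \<le> p j" "0 \<le> r"
  shows "ent_term (sum p T + r) \<le> (\<Sum>j\<in>T. ent_term (p j)) + r * (- log 2 avg) + (avg * (1 - real (card T)) - r) / ln 2"
proof (cases "T = {}")
  case True
  thus ?thesis using ent_tangent[OF assms(4) assms(2)] by (simp add: algebra_simps)
next
  case False
  define P where "P = sum p T"
  have P: "avg \<le> P"
  proof -
    obtain j where j: "j \<in> T" using False by auto
    have "p j \<le> P" unfolding P_def using assms j by (intro member_le_sum) (auto intro: order_trans[OF less_imp_le[OF assms(2)]])
    thus ?thesis using assms(3)[OF j] by linarith
  qed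
  have P0: "0 < P" using P assms(2) by linarith
  have t: "ent_term (P + r) \<le> - (P + r) * log 2 P + (P - (P + r)) / ln 2"
    using P0 assms(4) by (intro ent_tangent) auto
  have e: "- (P + r) * log 2 P + (P - (P + r)) / ln 2 = ent_term P - r * log 2 P - r / ln 2"
    using P0 by (simp add: ent_term_def algebra_simps)
  have l: "log 2 avg \<le> log 2 P" using P assms(2) by simp
  have l2: "- r * log 2 P \<le> r * (- log 2 avg)" using mult_left_mono[OF l assms(4)] by simp
  have ml: "ent_term P \<le> (\<Sum>j\<in>T. ent_term (p j)) - (real (card T) - 1) * avg / ln 2"
    unfolding P_def using merge_loss[OF assms(1) False assms(2)] assms(3) by blast
  have f: "(\<Sum>j\<in>T. ent_term (p j)) - (real (card T) - 1) * avg / ln 2 - r / ln 2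
     = (avg * (1 - real (card T)) - r) / ln 2 + (\<Sum>j\<in>T. ent_term (p j))"
  proof -
    have "(avg * (1 - real (card T)) - r) / ln 2 = avg * (1 - real (card T)) / ln 2 - r / ln 2"
      by (rule diff_divide_distrib)
    moreover have "avg * (1 - real (card T)) = - ((real (card T) - 1) * avg)" by (simp add: algebra_simps)
    ultimately have "(avg * (1 - real (card T)) - r) / ln 2 = - ((real (card T) - 1) * avg / ln 2) - r / ln 2"
      by simp
    thus ?thesis by linarith
  qed
  have "ent_term (P + r) \<le> (\<Sum>j\<in>T. ent_term (p j)) + r * (- log 2 avg) + (avg * (1 - real (card T)) - r) / ln 2"
    using t e l2 ml f by linarith
  thus ?thesis unfolding P_def .
qed



lemma chord_t:
  fixes t :: real assumes "1 \<le> t" "t \<le> 2" shows "t * ln t \<le> 2 * ln 2 * (t - 1)"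
proof (cases "t \<le> 2 * ln 2")
  case True
  have "ln t \<le> t - 1" using assms by (intro ln_le_minus_one) simp
  hence "t * ln t \<le> t * (t - 1)" using assms by (intro mult_left_mono) auto
  also have "\<dots> \<le> 2 * ln 2 * (t - 1)" using True assms by (intro mult_right_mono) auto
  finally show ?thesis .
next
  case False
  have "ln (t/2) \<le> t/2 - 1" using assms by (intro ln_le_minus_one) simp
  hence "t * ln (t/2) \<le> t * (t/2 - 1)" using assms by (intro mult_left_mono) auto
  also have "t * (t/2 - 1) = (t/2) * (t - 2)" by (simp add: algebra_simps)
  also have "(t/2) * (t - 2) \<le> ln 2 * (t - 2)" using False assms by (intro mult_right_mono_neg) auto
  finally have a: "t * ln (t/2) \<le> ln 2 * (t - 2)" .
  have "t * ln t = t * ln 2 + t * ln (t/2)" using assms by (simp add: ln_div algebra_simps)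
  thus ?thesis using a by (simp add: algebra_simps)
qed

lemma chord:
  assumes "0 < c" "c \<le> x" "x \<le> 2 * c"
  shows "- ent_term x \<le> x * log 2 c + 2 * (x - c)"
proof -
  have x: "0 < x" using assms by linarith
  define t where "t = x / c"
  have t: "1 \<le> t" "t \<le> 2" using assms by (auto simp: t_def field_simps)
  have xt: "x = c * t" using assms by (simp add: t_def)
  have "x * ln x = x * ln c + c * (t * ln t)" using assms t by (simp add: xt ln_mult algebra_simps)
  also have "c * (t * ln t) \<le> c * (2 * ln 2 * (t - 1))" using chord_t[OF t] assms by (intro mult_left_mono) auto
  also have "c * (2 * ln 2 * (t - 1)) = 2 * ln 2 * (x - c)" by (simp add: xt algebra_simps)
  finally have "x * ln x \<le> x * ln c + 2 * ln 2 * (x - c)" by simp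
  hence "x * ln x / ln 2 \<le> (x * ln c + 2 * ln 2 * (x - c)) / ln 2" by (simp add: divide_right_mono)
  also have "\<dots> = x * log 2 c + 2 * (x - c)" by (simp add: log_def add_divide_distrib)
  finally show ?thesis using x by (simp add: ent_term_def log_def)
qed

lemma ratio_sum:
  assumes "0 < c" "\<And>x. x \<in># R \<Longrightarrow> c \<le> x \<and> x \<le> 2 * c"
  shows "- (\<Sum>x\<in>#R. ent_term x) \<le> sum_mset R * log 2 c + 2 * sum_mset R - 2 * real (size R) * c"
  using assms(2)
proof (induction R)
  case empty thus ?case by simp
next
  case (add x R)
  have "- ent_term x \<le> x * log 2 c + 2 * (x - c)" using add.prems assms(1) by (intro chord) auto
  moreover have "- (\<Sum>x\<in>#R. ent_term x) \<le> sum_mset R * log 2 c + 2 * sum_mset R - 2 * real (size R) * c"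
    using add by auto
  ultimately show ?case by (simp add: algebra_simps)
qed

lemma sum_mset_ge:
  assumes "\<And>x. x \<in># R \<Longrightarrow> c \<le> x" shows "real (size R) * c \<le> sum_mset R"
  using assms
proof (induction R)
  case empty thus ?case by simp
next
  case (add x R)
  have "c \<le> x" using add.prems by simp
  moreover have "real (size R) * c \<le> sum_mset R" using add by auto
  ultimately show ?case by (simp add: algebra_simps)
qed

lemma ratio:
  assumes c: "0 < c" and R: "\<And>x. x \<in># R \<Longrightarrow> c \<le> x \<and> x \<le> 2 * c" and ne: "R \<noteq> {#}"
  shows "sum_mset R * log 2 (real (size R) / sum_mset R) - sum_mset R * (1 - (1 + ln (ln 2)) / ln 2)
         \<le> (\<Sum>x\<in>#R. ent_term x)"
proof -
  define s where "s = sum_mset R"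
  define u where "u = real (size R)"
  have u: "0 < u" using ne by (simp add: u_def nonempty_has_size)
  have suc: "u * c \<le> s" unfolding s_def u_def using R by (intro sum_mset_ge) auto
  have s: "0 < s" using u c suc by (smt (verit) mult_pos_pos)
  have l2: "0 < ln (2::real)" by simp
  define b where "b = s / (2 * ln 2 * u * c)"
  have b: "0 < b" using s u c l2 by (simp add: b_def)
  have "ln (1/b) \<le> 1/b - 1" using b by (intro ln_le_minus_one) simp
  hence hb: "0 \<le> ln b + 1/b - 1" using b by (simp add: ln_div)
  have lnb: "ln b = ln s - ln 2 - ln (ln 2) - ln u - ln c"
    using s u c l2 by (simp add: b_def ln_div ln_mult)
  have ib: "1/b = 2 * ln 2 * u * c / s" by (simp add: b_def)
  have rs: "- (\<Sum>x\<in>#R. ent_term x) \<le> s * log 2 c + 2 * s - 2 * u * c"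
    using ratio_sum[OF c R] by (simp add: s_def u_def)
  have eq: "(- (s * log 2 c + 2 * s - 2 * u * c)) - (s * log 2 (u / s) - s * (1 - (1 + ln (ln 2)) / ln 2))
         = s / ln 2 * (ln b + 1/b - 1)"
    unfolding lnb ib using s u c l2 by (simp add: log_def ln_div field_simps)
  have "0 \<le> s / ln 2 * (ln b + 1/b - 1)" using hb s l2 by simp
  hence "s * log 2 (u / s) - s * (1 - (1 + ln (ln 2)) / ln 2) \<le> - (s * log 2 c + 2 * s - 2 * u * c)"
    using eq by linarith
  thus ?thesis using rs unfolding s_def u_def by linarith
qed

lemma agg_bound:
  fixes pp :: "nat \<Rightarrow> real"
  assumes pnn: "\<And>j. j < n \<Longrightarrow> 0 \<le> pp j" and sig: "\<And>j. j < n \<Longrightarrow> \<sigma> j < m"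
    and Top: "Top \<subseteq> {..<n}" and km: "card Top < m"
    and s: "s = (\<Sum>j\<in>{..<n} - Top. pp j)" and s0: "0 < s"
    and big: "\<And>j. j \<in> Top \<Longrightarrow> s / (real m - real (card Top)) \<le> pp j"
  shows "(\<Sum>i<m. ent_term (\<Sum>j\<in>{j\<in>{..<n}. \<sigma> j = i}. pp j))
     \<le> (\<Sum>j\<in>Top. ent_term (pp j)) + s * log 2 ((real m - real (card Top)) / s)"
proof -
  define u where "u = real m - real (card Top)"
  have u: "0 < u" using km by (simp add: u_def)
  define avg where "avg = s / u"
  have avg: "0 < avg" using s0 u by (simp add: avg_def)
  define B where "B i = {j\<in>{..<n}. \<sigma> j = i}" for i
  define T where "T i = B i \<inter> Top" for i
  define r where "r i = sum pp (B i - Top)" for i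
  have fB: "finite (B i)" for i by (simp add: B_def)
  have fTop: "finite Top" using Top finite_subset by blast
  have fT: "finite (T i)" for i by (simp add: T_def B_def)
  have split: "sum pp (B i) = sum pp (T i) + r i" for i
    unfolding T_def r_def by (rule sum.Int_Diff[OF fB])
  have r0: "0 \<le> r i" for i unfolding r_def B_def using pnn by (intro sum_nonneg) auto
  have blk: "ent_term (sum pp (B i)) \<le> (\<Sum>j\<in>T i. ent_term (pp j)) + r i * (- log 2 avg)
      + (avg * (1 - real (card (T i))) - r i) / ln 2" for i
    unfolding split using big r0 by (intro block_bound[OF fT avg]) (auto simp: T_def avg_def u_def)
  have sg: "\<sigma> ` A \<subseteq> {..<m}" if "A \<subseteq> {..<n}" for A using sig that by auto
  have S1: "(\<Sum>i<m. \<Sum>j\<in>T i. ent_term (pp j)) = (\<Sum>j\<in>Top. ent_term (pp j))"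
  proof -
    have "(\<Sum>i<m. \<Sum>j\<in>{x\<in>Top. \<sigma> x = i}. ent_term (pp j)) = (\<Sum>j\<in>Top. ent_term (pp j))"
      using Top sig fTop by (intro sum.group) (auto intro: sig simp: subset_iff)
    moreover have "{x\<in>Top. \<sigma> x = i} = T i" for i using Top by (auto simp: T_def B_def)
    ultimately show ?thesis by simp
  qed
  have S2: "(\<Sum>i<m. r i) = s"
  proof -
    have "(\<Sum>i<m. \<Sum>j\<in>{x\<in>{..<n} - Top. \<sigma> x = i}. pp j) = (\<Sum>j\<in>{..<n} - Top. pp j)"
      by (intro sum.group) (auto intro: sig)
    moreover have "{x\<in>{..<n} - Top. \<sigma> x = i} = B i - Top" for i by (auto simp: B_def)
    ultimately show ?thesis by (simp add: r_def s)
  qed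
  have S3: "(\<Sum>i<m. real (card (T i))) = real (card Top)"
  proof -
    have "(\<Sum>i<m. \<Sum>j\<in>{x\<in>Top. \<sigma> x = i}. (1::real)) = (\<Sum>j\<in>Top. 1)"
      using Top sig fTop by (intro sum.group) (auto intro: sig simp: subset_iff)
    moreover have "{x\<in>Top. \<sigma> x = i} = T i" for i using Top by (auto simp: T_def B_def)
    ultimately show ?thesis by simp
  qed
  have "(\<Sum>i<m. ent_term (\<Sum>j\<in>{j\<in>{..<n}. \<sigma> j = i}. pp j)) = (\<Sum>i<m. ent_term (sum pp (B i)))"
    by (simp add: B_def)
  also have "\<dots> \<le> (\<Sum>i<m. (\<Sum>j\<in>T i. ent_term (pp j)) + r i * (- log 2 avg)
      + (avg * (1 - real (card (T i))) - r i) / ln 2)"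
    by (intro sum_mono blk)
  also have "\<dots> = (\<Sum>i<m. \<Sum>j\<in>T i. ent_term (pp j)) + (\<Sum>i<m. r i) * (- log 2 avg)
      + (avg * (real m - (\<Sum>i<m. real (card (T i)))) - (\<Sum>i<m. r i)) / ln 2"
    by (simp add: sum.distrib sum_distrib_right sum_divide_distrib[symmetric] sum_subtractf
         right_diff_distrib sum_distrib_left)
  also have "\<dots> = (\<Sum>j\<in>Top. ent_term (pp j)) + s * (- log 2 avg)"
  proof -
    have "avg * (real m - real (card Top)) - s = 0" using u by (simp add: avg_def u_def)
    thus ?thesis by (simp add: S1 S2 S3)
  qed
  also have "- log 2 avg = log 2 (u / s)" using u s0 by (simp add: avg_def log_divide)
  finally show ?thesis by (simp add: u_def)
qed



lemma hs_shape:
  assumes "2 \<le> length xs"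
  obtains x y rest where "sort xs = x # y # rest" "x \<le> y" "\<forall>z\<in>set rest. y \<le> z"
    "huffman_step xs = rev (sort ((x + y) # rest))"
proof -
  have len: "2 \<le> length (sort xs)" using assms by simp
  have "\<exists>x y rest. sort xs = x # y # rest"
  proof (cases "sort xs")
    case Nil with len show ?thesis by simp
  next
    case (Cons a l) with len show ?thesis by (cases l) auto
  qed
  then obtain x y rest where s: "sort xs = x # y # rest" by blast
  have "sorted (sort xs)" by simp
  hence so: "sorted (x # y # rest)" by (simp only: s)
  hence "x \<le> y" "\<forall>z\<in>set rest. y \<le> z" by auto
  moreover have "huffman_step xs = rev (sort ((x + y) # rest))"
    by (simp add: huffman_step_def s Let_def)
  ultimately show ?thesis using that s by blast
qed

definition hinv :: "real list \<Rightarrow> real list \<Rightarrow> bool" where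
  "hinv p xs \<longleftrightarrow> (\<forall>z\<in>set xs. 0 \<le> z) \<and> sum_list xs = sum_list p \<and>
     (\<forall>\<theta>. 2 * Min (set xs) \<le> \<theta> \<longrightarrow> filter_mset (\<lambda>z. \<theta> < z) (mset xs) = filter_mset (\<lambda>z. \<theta> < z) (mset p))"

lemma hinv_step:
  assumes "hinv p xs" "2 \<le> length xs"
  shows "hinv p (huffman_step xs)"
proof -
  obtain x y rest where s: "sort xs = x # y # rest" and xy: "x \<le> y"
    and ry: "\<forall>z\<in>set rest. y \<le> z" and h: "huffman_step xs = rev (sort ((x + y) # rest))"
    by (rule hs_shape[OF assms(2)])
  have "mset xs = mset (sort xs)" by simp
  hence mxs: "mset xs = add_mset x (add_mset y (mset rest))" by (simp add: s)
  have mh: "mset (huffman_step xs) = add_mset (x + y) (mset rest)" by (simp add: h)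
  have "set xs = set (sort xs)" by simp
  hence sxs: "set xs = insert x (insert y (set rest))" by (simp add: s)
  have sh: "set (huffman_step xs) = insert (x + y) (set rest)" by (simp add: h set_insort_key)
  have nn: "\<forall>z\<in>set xs. 0 \<le> z" using assms(1) by (simp add: hinv_def)
  hence x0: "0 \<le> x" and y0: "0 \<le> y" and r0: "\<forall>z\<in>set rest. 0 \<le> z" using sxs by auto
  have nn': "\<forall>z\<in>set (huffman_step xs). 0 \<le> z" using sh x0 y0 r0 by auto
  have sum': "sum_list (huffman_step xs) = sum_list p"
  proof -
    have "sum_list (huffman_step xs) = sum_mset (mset (huffman_step xs))" by (simp add: sum_mset_sum_list)
    also have "\<dots> = sum_mset (mset xs)" by (simp add: mh mxs)
    also have "\<dots> = sum_list p" using assms(1) by (simp add: sum_mset_sum_list hinv_def)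
    finally show ?thesis .
  qed
  have rx: "\<forall>z\<in>set rest. x \<le> z" using xy ry by (meson order_trans)
  have minx: "Min (set xs) = x"
    using sxs xy rx by (intro Min_eqI) auto
  have miny: "y \<le> Min (set (huffman_step xs))"
    using sh x0 ry by (subst Min_ge_iff) auto
  have filt: "filter_mset (\<lambda>z. \<theta> < z) (mset (huffman_step xs)) = filter_mset (\<lambda>z. \<theta> < z) (mset p)"
    if th: "2 * Min (set (huffman_step xs)) \<le> \<theta>" for \<theta>
  proof -
    have y2: "2 * y \<le> \<theta>" using th miny by linarith
    have "2 * Min (set xs) \<le> \<theta>" using minx xy y2 by linarith
    hence old: "filter_mset (\<lambda>z. \<theta> < z) (mset xs) = filter_mset (\<lambda>z. \<theta> < z) (mset p)"
      using assms(1) by (simp add: hinv_def)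
    have "filter_mset (\<lambda>z. \<theta> < z) (mset xs) = filter_mset (\<lambda>z. \<theta> < z) (mset rest)"
      using y2 xy y0 by (simp add: mxs)
    moreover have "filter_mset (\<lambda>z. \<theta> < z) (mset (huffman_step xs)) = filter_mset (\<lambda>z. \<theta> < z) (mset rest)"
      using y2 xy by (simp add: mh)
    ultimately show ?thesis using old by simp
  qed
  show ?thesis unfolding hinv_def using nn' sum' filt by blast
qed

definition coarse :: "real list \<Rightarrow> real list \<Rightarrow> bool" where
  "coarse p xs \<longleftrightarrow> (\<exists>\<sigma>. (\<forall>j<length p. \<sigma> j < length xs) \<and>
     (\<forall>i<length xs. xs ! i = (\<Sum>j\<in>{j\<in>{..<length p}. \<sigma> j = i}. p ! j)))"

lemma coarse_refl: "coarse p p"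
  unfolding coarse_def
proof (intro exI[of _ "\<lambda>j. j"] conjI allI impI)
  fix i assume "i < length p"
  hence "{j\<in>{..<length p}. j = i} = {i}" by auto
  thus "p ! i = (\<Sum>j\<in>{j\<in>{..<length p}. j = i}. p ! j)" by simp
qed simp

lemma coarse_perm:
  assumes "coarse p xs" "mset ys = mset xs"
  shows "coarse p ys"
proof -
  obtain \<sigma> where s: "\<forall>j<length p. \<sigma> j < length xs"
    "\<forall>i<length xs. xs ! i = (\<Sum>j\<in>{j\<in>{..<length p}. \<sigma> j = i}. p ! j)"
    using assms(1) by (auto simp: coarse_def)
  obtain \<pi> where pi: "\<pi> permutes {..<length xs}" "permute_list \<pi> xs = ys"
    using mset_eq_permutation[OF assms(2)] by blast
  have len: "length ys = length xs" using pi(2) by auto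
  have ipi: "inv \<pi> permutes {..<length xs}" using pi(1) by (rule permutes_inv)
  show ?thesis unfolding coarse_def
  proof (intro exI[of _ "\<lambda>j. inv \<pi> (\<sigma> j)"] conjI allI impI)
    fix j assume "j < length p"
    thus "inv \<pi> (\<sigma> j) < length ys" using s(1) permutes_in_image[OF ipi, of "\<sigma> j"] len by simp
  next
    fix i assume i: "i < length ys"
    have "ys ! i = xs ! (\<pi> i)" using pi i len by (metis permute_list_nth)
    also have "\<dots> = (\<Sum>j\<in>{j\<in>{..<length p}. \<sigma> j = \<pi> i}. p ! j)"
      using s(2) permutes_in_image[OF pi(1), of i] i len by simp
    also have "{j\<in>{..<length p}. \<sigma> j = \<pi> i} = {j\<in>{..<length p}. inv \<pi> (\<sigma> j) = i}"
      using pi(1) by (auto simp: permutes_inv_eq)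
    finally show "ys ! i = (\<Sum>j\<in>{j\<in>{..<length p}. inv \<pi> (\<sigma> j) = i}. p ! j)" .
  qed
qed

lemma coarse_merge:
  assumes "coarse p (x # y # rest)"
  shows "coarse p ((x + y) # rest)"
proof -
  obtain \<sigma> where s: "\<forall>j<length p. \<sigma> j < length (x # y # rest)"
    "\<forall>i<length (x # y # rest). (x # y # rest) ! i = (\<Sum>j\<in>{j\<in>{..<length p}. \<sigma> j = i}. p ! j)"
    using assms(1) by (auto simp: coarse_def)
  define \<tau> where "\<tau> j = (if \<sigma> j < 2 then 0 else \<sigma> j - 1)" for j
  show ?thesis unfolding coarse_def
  proof (intro exI[of _ \<tau>] conjI allI impI)
    fix j assume "j < length p"
    thus "\<tau> j < length ((x + y) # rest)" using s(1) by (auto simp: \<tau>_def)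
  next
    fix i assume i: "i < length ((x + y) # rest)"
    show "((x + y) # rest) ! i = (\<Sum>j\<in>{j\<in>{..<length p}. \<tau> j = i}. p ! j)"
    proof (cases "i = 0")
      case True
      have "{j\<in>{..<length p}. \<tau> j = 0} = {j\<in>{..<length p}. \<sigma> j = 0} \<union> {j\<in>{..<length p}. \<sigma> j = 1}"
        by (auto simp: \<tau>_def)
      hence "(\<Sum>j\<in>{j\<in>{..<length p}. \<tau> j = 0}. p ! j)
          = (\<Sum>j\<in>{j\<in>{..<length p}. \<sigma> j = 0}. p ! j) + (\<Sum>j\<in>{j\<in>{..<length p}. \<sigma> j = 1}. p ! j)"
        by (simp add: sum.union_disjoint disjoint_iff)
      also have "\<dots> = x + y"
      proof -
        have "(x # y # rest) ! 0 = (\<Sum>j\<in>{j\<in>{..<length p}. \<sigma> j = 0}. p ! j)" using s(2)[rule_format, of 0] by simp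
        moreover have "(x # y # rest) ! 1 = (\<Sum>j\<in>{j\<in>{..<length p}. \<sigma> j = 1}. p ! j)"
          using s(2)[rule_format, of 1] by simp
        ultimately show ?thesis by simp
      qed
      finally show ?thesis using True by simp
    next
      case False
      then obtain k where k: "i = Suc k" by (cases i) auto
      have si: "Suc i < length (x # y # rest)" using i by simp
      have "((x + y) # rest) ! i = (x # y # rest) ! Suc i" using k by simp
      also have "\<dots> = (\<Sum>j\<in>{j\<in>{..<length p}. \<sigma> j = Suc i}. p ! j)" using s(2) si by blast
      also have "{j\<in>{..<length p}. \<sigma> j = Suc i} = {j\<in>{..<length p}. \<tau> j = i}" using k by (auto simp: \<tau>_def)
      finally show ?thesis .
    qed
  qed
qed

lemma coarse_step:
  assumes "coarse p xs" "2 \<le> length xs"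
  shows "coarse p (huffman_step xs)"
proof -
  obtain x y rest where s: "sort xs = x # y # rest" and "x \<le> y" and "\<forall>z\<in>set rest. y \<le> z"
    and h: "huffman_step xs = rev (sort ((x + y) # rest))"
    by (rule hs_shape[OF assms(2)])
  have "coarse p (sort xs)" using assms(1) by (rule coarse_perm) simp
  hence "coarse p ((x + y) # rest)" unfolding s by (rule coarse_merge)
  hence "coarse p (rev (sort ((x + y) # rest)))" by (rule coarse_perm) simp
  thus ?thesis by (simp add: h)
qed

lemma iter_inv:
  assumes "\<forall>z\<in>set p. 0 \<le> z"
  shows "t + 2 \<le> length p \<Longrightarrow> hinv p ((huffman_step ^^ t) p) \<and> coarse p ((huffman_step ^^ t) p)
     \<and> length ((huffman_step ^^ t) p) = length p - t"
proof (induction t)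
  case 0
  have "hinv p p" using assms by (simp add: hinv_def)
  thus ?case by (simp add: coarse_refl)
next
  case (Suc t)
  hence IH: "hinv p ((huffman_step ^^ t) p)" "coarse p ((huffman_step ^^ t) p)"
    "length ((huffman_step ^^ t) p) = length p - t" by auto
  have l2: "2 \<le> length ((huffman_step ^^ t) p)" using IH(3) Suc.prems by simp
  obtain x y rest where s: "sort ((huffman_step ^^ t) p) = x # y # rest" and "x \<le> y"
    and "\<forall>z\<in>set rest. y \<le> z"
    and h: "huffman_step ((huffman_step ^^ t) p) = rev (sort ((x + y) # rest))"
    by (rule hs_shape[OF l2])
  have "length (sort ((huffman_step ^^ t) p)) = length p - t" using IH(3) by simp
  hence "length (huffman_step ((huffman_step ^^ t) p)) = length p - Suc t" using s h by simp
  thus ?case using hinv_step[OF IH(1) l2] coarse_step[OF IH(2) l2] by simp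
qed


lemma H_nth: "H xs = (\<Sum>i<length xs. ent_term (xs ! i))"
  by (simp add: H_def sum_list_sum_nth atLeast0LessThan)

lemma H_mset: "H xs = (\<Sum>x\<in>#mset xs. ent_term x)"
  by (simp add: H_def flip: sum_mset_sum_list)

lemma mset_nth_filter_sum:
  "(\<Sum>x\<in>#filter_mset P (mset xs). f x) = (\<Sum>j\<in>{j\<in>{..<length xs}. P (xs ! j)}. f (xs ! j))"
proof -
  have "mset xs = mset (map (\<lambda>j. xs ! j) [0..<length xs])" by (simp add: map_nth)
  hence m: "mset xs = image_mset (\<lambda>j. xs ! j) (mset_set {..<length xs})" by (simp add: atLeast0LessThan)
  show ?thesis unfolding m filter_mset_image_mset
    by (simp add: sum_unfold_sum_mset[of "\<lambda>j. f (xs ! j)"] image_mset.compositionality o_def)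
qed

lemma sum_mset_nonneg_f: "(\<And>x. x \<in># M \<Longrightarrow> 0 \<le> f x) \<Longrightarrow> 0 \<le> (\<Sum>x\<in>#M. (f x :: real))"
  by (induction M) auto

lemma sum_mset_le:
  assumes "\<And>x. x \<in># R \<Longrightarrow> x \<le> d" shows "sum_mset R \<le> real (size R) * d"
  using assms
proof (induction R)
  case empty thus ?case by simp
next
  case (add x R)
  have "x \<le> d" using add.prems by simp
  moreover have "sum_mset R \<le> real (size R) * d" using add by auto
  ultimately show ?case by (simp add: algebra_simps)
qed

lemma E_ge_H:
  assumes "coupling p q M"
  shows "H p \<le> mat_entropy (length q) (length p) M"
proof -
  have nn: "\<And>i j. i < length q \<Longrightarrow> j < length p \<Longrightarrow> 0 \<le> M i j"
    and cs: "\<And>j. j < length p \<Longrightarrow> (\<Sum>i<length q. M i j) = p ! j"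
    using assms by (auto simp: coupling_def)
  have "H p = (\<Sum>j<length p. ent_term (\<Sum>i<length q. M i j))" using cs by (simp add: H_nth)
  also have "\<dots> \<le> (\<Sum>j<length p. \<Sum>i<length q. ent_term (M i j))"
    using nn by (intro sum_mono ent_sum_le) auto
  also have "\<dots> = mat_entropy (length q) (length p) M" unfolding mat_entropy_def by (rule sum.swap)
  finally show ?thesis .
qed

lemma det_ent:
  assumes "\<And>j. j < n \<Longrightarrow> \<sigma> j < m"
  shows "mat_entropy m n (\<lambda>i j. if \<sigma> j = i then pp j else 0) = (\<Sum>j<n. ent_term (pp j))"
proof -
  have "mat_entropy m n (\<lambda>i j. if \<sigma> j = i then pp j else 0) = (\<Sum>i<m. \<Sum>j<n. if \<sigma> j = i then ent_term (pp j) else 0)"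
    unfolding mat_entropy_def by (simp add: ent_if0)
  also have "\<dots> = (\<Sum>j<n. \<Sum>i<m. if \<sigma> j = i then ent_term (pp j) else 0)" by (rule sum.swap)
  also have "\<dots> = (\<Sum>j<n. ent_term (pp j))" using assms by (intro sum.cong refl) simp
  finally show ?thesis .
qed

lemma huff_key:
  fixes p qb :: "real list" and \<sigma> :: "nat \<Rightarrow> nat"
  assumes pnn: "\<forall>z\<in>set p. 0 \<le> z" and p1: "sum_list p = 1" and hv: "hinv p qb"
    and lq: "length qb = m" and m0: "0 < m"
    and sig: "\<And>j. j < length p \<Longrightarrow> \<sigma> j < m"
  shows "(\<Sum>i<m. ent_term (\<Sum>j\<in>{j\<in>{..<length p}. \<sigma> j = i}. p ! j)) \<le> H qb + (1 - (1 + ln (ln 2)) / ln 2)"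
proof -
  define n where "n = length p"
  define \<alpha> where "\<alpha> = 1 - (1 + ln (ln 2)) / ln (2::real)"
  have \<alpha>0: "0 \<le> \<alpha>" using alpha_bounds(1) by (simp add: \<alpha>_def)
  have pj: "0 \<le> p ! j" if "j < n" for j using pnn that by (simp add: n_def)
  have psum: "(\<Sum>j<n. p ! j) = 1" using p1 by (simp add: n_def sum_list_sum_nth atLeast0LessThan)
  have ne: "set qb \<noteq> {}" using lq m0 by auto
  define c where "c = Min (set qb)"
  have cin: "c \<in> set qb" using ne by (simp add: c_def)
  have qnn: "\<forall>z\<in>set qb. 0 \<le> z" and qsum: "sum_list qb = 1" using hv p1 by (auto simp: hinv_def)
  have c0: "0 \<le> c" using cin qnn by auto
  have cle: "c \<le> z" if "z \<in> set qb" for z using that by (simp add: c_def)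
  have F: "filter_mset (\<lambda>z. 2*c < z) (mset qb) = filter_mset (\<lambda>z. 2*c < z) (mset p)"
    using hv by (simp add: hinv_def c_def)
  define Top where "Top = {j\<in>{..<n}. 2*c < p ! j}"
  have TopS: "Top \<subseteq> {..<n}" by (auto simp: Top_def)
  have fTop: "finite Top" by (simp add: Top_def)
  define R where "R = filter_mset (\<lambda>z. \<not> 2*c < z) (mset qb)"
  have part: "mset qb = filter_mset (\<lambda>z. 2*c < z) (mset p) + R"
    unfolding R_def F[symmetric] by (rule multiset_partition)
  have FTop: "(\<Sum>x\<in>#filter_mset (\<lambda>z. 2*c < z) (mset p). f x) = (\<Sum>j\<in>Top. f (p ! j))" for f :: "real \<Rightarrow> real"
    unfolding mset_nth_filter_sum Top_def n_def by simp
  have Hq: "H qb = (\<Sum>j\<in>Top. ent_term (p ! j)) + (\<Sum>x\<in>#R. ent_term x)"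
    unfolding H_mset part by (simp add: FTop)
  have "real m = (\<Sum>x\<in>#mset qb. 1)" using lq by simp
  also have "\<dots> = (\<Sum>j\<in>Top. 1) + (\<Sum>x\<in>#R. 1)" unfolding part by (simp only: image_mset_union sum_mset.union FTop[of "\<lambda>_. 1"])
  finally have sizeR: "real (size R) = real m - real (card Top)" by simp
  define s where "s = (\<Sum>j\<in>{..<n} - Top. p ! j)"
  have sTop: "(\<Sum>j\<in>Top. p ! j) + s = 1"
    using sum.subset_diff[OF TopS, of "\<lambda>j. p ! j"] psum by (simp add: s_def)
  have "1 = (\<Sum>x\<in>#mset qb. x)" using qsum by (simp add: sum_mset_sum_list)
  also have "\<dots> = (\<Sum>j\<in>Top. p ! j) + (\<Sum>x\<in>#R. x)" unfolding part by (simp only: image_mset_union sum_mset.union FTop[of "\<lambda>x. x"])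
  finally have sumR: "sum_mset R = s" using sTop by simp
  have Rmem: "c \<le> z \<and> z \<le> 2*c" if "z \<in># R" for z using that cle by (auto simp: R_def)
  have cR: "c \<in># R" using cin c0 by (simp add: R_def)
  hence Rne: "R \<noteq> {#}" by auto
  hence "0 < size R" by (simp add: nonempty_has_size)
  hence km: "card Top < m" using sizeR by linarith
  have s0: "0 \<le> s" unfolding s_def using pj by (intro sum_nonneg) auto
  have sTop0: "0 \<le> (\<Sum>j\<in>Top. p ! j)" using pj TopS by (intro sum_nonneg) auto
  define a where "a i = ent_term (\<Sum>j\<in>{j\<in>{..<n}. \<sigma> j = i}. p ! j)" for i
  show ?thesis
  proof (cases "s = 0")
    case False
    hence sp: "0 < s" using s0 by simp
    have cp: "0 < c"
    proof (rule ccontr)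
      assume "\<not> 0 < c"
      hence "c = 0" using c0 by simp
      hence "\<forall>z. z \<in># R \<longrightarrow> z = 0" using Rmem by force
      hence z0: "\<And>z. z \<in># R \<Longrightarrow> z = 0" by blast
      have "sum_mset R \<le> real (size R) * 0" by (rule sum_mset_le) (metis order_refl z0)
      moreover have "real (size R) * 0 \<le> sum_mset R" by (rule sum_mset_ge) (metis order_refl z0)
      ultimately have "sum_mset R = 0" by simp
      thus False using sumR sp by simp
    qed
    have rat: "sum_mset R * log 2 (real (size R) / sum_mset R) - sum_mset R * \<alpha> \<le> (\<Sum>x\<in>#R. ent_term x)"
      unfolding \<alpha>_def by (rule ratio[OF cp Rmem Rne])
    have "s \<le> real (size R) * (2 * c)" using sum_mset_le[of R "2*c"] Rmem sumR by auto
    hence avg: "s / (real m - real (card Top)) \<le> 2 * c"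
      using sizeR \<open>0 < size R\<close> by (simp add: divide_le_eq mult.commute)
    have big: "s / (real m - real (card Top)) \<le> p ! j" if "j \<in> Top" for j
      using that avg by (auto simp: Top_def)
    have ag: "(\<Sum>i<m. a i) \<le> (\<Sum>j\<in>Top. ent_term (p ! j)) + s * log 2 ((real m - real (card Top)) / s)"
      unfolding a_def using agg_bound[of n "\<lambda>j. p ! j" \<sigma> m Top s] pj sig TopS km sp big
      by (simp add: s_def n_def)
    have s1: "s \<le> 1" using sTop sTop0 by linarith
    have "s * \<alpha> \<le> 1 * \<alpha>" using s1 \<alpha>0 by (intro mult_right_mono) auto
    hence "s * \<alpha> \<le> \<alpha>" by simp
    thus ?thesis using ag rat Hq sumR sizeR unfolding a_def[symmetric] \<alpha>_def[symmetric] n_def[symmetric]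
      by simp
  next
    case True
    have z: "p ! j = 0" if "j \<in> {..<n} - Top" for j
      using True unfolding s_def using sum_nonneg_eq_0_iff[of "{..<n} - Top" "\<lambda>j. p ! j"] pj that by auto
    have "(\<Sum>i<m. a i) \<le> (\<Sum>i<m. \<Sum>j\<in>{j\<in>{..<n}. \<sigma> j = i}. ent_term (p ! j))"
      unfolding a_def using pj by (intro sum_mono ent_sum_le) auto
    also have "\<dots> = (\<Sum>j<n. ent_term (p ! j))"
      using sig by (intro sum.group) (auto simp: n_def)
    also have "\<dots> = (\<Sum>j\<in>Top. ent_term (p ! j)) + (\<Sum>j\<in>{..<n} - Top. ent_term (p ! j))"
      using sum.subset_diff[OF TopS, of "\<lambda>j. ent_term (p ! j)"] by simp
    also have "(\<Sum>j\<in>{..<n} - Top. ent_term (p ! j)) = 0" using z by (simp add: ent_term_def)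
    also have "0 \<le> (\<Sum>x\<in>#R. ent_term x)"
    proof (rule sum_mset_nonneg_f)
      fix x assume x: "x \<in># R"
      hence "x \<in> set qb" by (simp add: R_def)
      hence "0 \<le> x" "x \<le> 1" using qnn qsum member_le_sum_list[of x qb] by auto
      thus "0 \<le> ent_term x" by (rule ent_nonneg)
    qed
    hence "(\<Sum>j\<in>Top. ent_term (p ! j)) + 0 \<le> H qb" using Hq by simp
    finally have X: "(\<Sum>i<m. a i) \<le> H qb" .
    have "(\<Sum>i<m. a i) \<le> H qb + \<alpha>" using X \<alpha>0 by linarith
    thus ?thesis unfolding a_def n_def \<alpha>_def .
  qed
qed

theorem mainTheorem14:
  fixes p :: "real list" and n m :: nat
  assumes "length p = n" and "n > m" and "m \<ge> 2"
    and "prob_vec p" and "sorted_wrt (\<ge>) p"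
  shows "D p ((huffman_step ^^ (n - m)) p)
           \<le> (INF q \<in> {q. prob_vec q \<and> length q = m}. D p q)
              + (1 - (1 + ln (ln 2)) / ln 2)
         \<and> 1 - (1 + ln (ln 2)) / ln (2::real) < 0.08608"
proof -
  define qb where "qb = (huffman_step ^^ (n - m)) p"
  define \<alpha> where "\<alpha> = 1 - (1 + ln (ln 2)) / ln (2::real)"
  have pnn: "\<forall>z\<in>set p. 0 \<le> z" and p1: "sum_list p = 1" using assms(4) by (auto simp: prob_vec_def)
  have pj: "0 \<le> p ! j" if "j < n" for j using pnn that assms(1) by auto
  have psum: "(\<Sum>j<n. p ! j) = 1" using p1 assms(1) by (simp add: sum_list_sum_nth atLeast0LessThan)
  have it: "hinv p qb \<and> coarse p qb \<and> length qb = length p - (n - m)"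
    unfolding qb_def using iter_inv[OF pnn, of "n - m"] assms(1-3) by simp
  hence hv: "hinv p qb" and co: "coarse p qb" and lq: "length qb = m" using assms(1-3) by auto
  have m0: "0 < m" using assms(3) by simp
  obtain \<sigma>0 where s0: "\<forall>j<n. \<sigma>0 j < m" "\<forall>i<m. qb ! i = (\<Sum>j\<in>{j\<in>{..<n}. \<sigma>0 j = i}. p ! j)"
    using co lq assms(1) by (auto simp: coarse_def)
  define M0 where "M0 = (\<lambda>i j. if \<sigma>0 j = i then p ! j else 0)"
  have cM0: "coupling p qb M0"
    unfolding coupling_def
  proof (intro conjI allI impI)
    fix i j assume "i < length qb" "j < length p"
    thus "0 \<le> M0 i j" using pj assms(1) by (simp add: M0_def)
  next
    fix i assume i: "i < length qb"
    have "(\<Sum>j<length p. M0 i j) = (\<Sum>j\<in>{j\<in>{..<n}. \<sigma>0 j = i}. p ! j)"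
      unfolding M0_def assms(1) by (rule sum.inter_filter[symmetric]) simp
    thus "(\<Sum>j<length p. M0 i j) = qb ! i" using s0(2) i lq by simp
  next
    fix j assume j: "j < length p"
    show "(\<Sum>i<length qb. M0 i j) = p ! j" using s0(1) j lq assms(1) by (simp add: M0_def)
  qed
  have HpE: "mat_entropy m n M0 = H p"
    unfolding M0_def using det_ent[of n \<sigma>0 m "\<lambda>j. p ! j"] s0(1) by (simp add: H_nth assms(1))
  have Wqb: "W p qb \<le> H p"
  proof -
    have "Inf {mat_entropy (length qb) (length p) M | M. coupling p qb M} \<le> mat_entropy (length qb) (length p) M0"
    proof (rule cInf_lower)
      show "mat_entropy (length qb) (length p) M0 \<in> {mat_entropy (length qb) (length p) M | M. coupling p qb M}"
        using cM0 by blast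
      show "bdd_below {mat_entropy (length qb) (length p) M | M. coupling p qb M}"
        by (rule bdd_belowI[of _ "H p"]) (auto intro: E_ge_H)
    qed
    thus ?thesis using HpE lq assms(1) by (simp add: W_def)
  qed
  have up: "D p qb \<le> H p - H qb" using Wqb by (simp add: D_def)
  have low: "H p - H qb - \<alpha> \<le> D p q" if q: "q \<in> {q. prob_vec q \<and> length q = m}" for q
  proof -
    have qnn: "\<forall>z\<in>set q. 0 \<le> z" and q1: "sum_list q = 1" and lqq: "length q = m"
      using q by (auto simp: prob_vec_def)
    have qsum: "(\<Sum>i<m. q ! i) = 1" using q1 lqq by (simp add: sum_list_sum_nth atLeast0LessThan)
    let ?S = "{mat_entropy (length q) (length p) M | M. coupling p q M}"
    have neS: "?S \<noteq> {}"
    proof -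
      have "coupling p q (\<lambda>i j. q ! i * p ! j)"
        unfolding coupling_def
      proof (intro conjI allI impI)
        fix i j assume "i < length q" "j < length p"
        thus "0 \<le> q ! i * p ! j" using qnn pnn by simp
      next
        fix i assume "i < length q"
        show "(\<Sum>j<length p. q ! i * p ! j) = q ! i" using psum assms(1) by (simp add: sum_distrib_left[symmetric])
      next
        fix j assume "j < length p"
        show "(\<Sum>i<length q. q ! i * p ! j) = p ! j" using qsum lqq by (simp add: sum_distrib_right[symmetric])
      qed
      thus ?thesis by blast
    qed
    have lb: "(H p + H q + (H p - H qb - \<alpha>)) / 2 \<le> x" if x: "x \<in> ?S" for x
    proof -
      obtain M where M: "coupling p q M" and xM: "x = mat_entropy (length q) (length p) M" using x by blast
      have EH: "H p \<le> x" using E_ge_H[OF M] xM by simp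
      have nn: "\<forall>i<m. \<forall>j<n. 0 \<le> M i j" and rs: "\<forall>i<m. (\<Sum>j<n. M i j) = q ! i"
        and cs: "\<forall>j<n. (\<Sum>i<m. M i j) = p ! j"
        using M lqq assms(1) by (auto simp: coupling_def)
      obtain \<sigma> where sg: "\<forall>j<n. \<sigma> j < m"
        and vb: "(\<Sum>j<n. ent_term (p ! j)) - (\<Sum>i<m. ent_term (\<Sum>j\<in>{j\<in>{..<n}. \<sigma> j = i}. p ! j)) \<le> phi m n M"
        using vertex_aux[OF m0, of n "card (nz m n M)" "\<lambda>j. p ! j"] nn cs by blast
      have phiE: "phi m n M = x - H q"
      proof -
        have "phi m n M = mat_entropy m n M - (\<Sum>i<m. ent_term (\<Sum>j<n. M i j))"
          by (simp add: phi_def Gf_def sum_subtractf mat_entropy_def)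
        also have "(\<Sum>i<m. ent_term (\<Sum>j<n. M i j)) = H q" using rs lqq by (simp add: H_nth)
        finally show ?thesis using xM lqq assms(1) by simp
      qed
      have hk: "(\<Sum>i<m. ent_term (\<Sum>j\<in>{j\<in>{..<n}. \<sigma> j = i}. p ! j)) \<le> H qb + \<alpha>"
        using huff_key[OF pnn p1 hv lq m0, of \<sigma>] sg assms(1) unfolding \<alpha>_def by simp
      have "H p - H qb - \<alpha> \<le> x - H q" using vb phiE hk by (simp add: H_nth assms(1))
      thus ?thesis using EH by simp
    qed
    have "(H p + H q + (H p - H qb - \<alpha>)) / 2 \<le> W p q"
      unfolding W_def by (rule cInf_greatest[OF neS lb]) 
    thus ?thesis by (simp add: D_def)
  qed
  have neQ: "{q. prob_vec q \<and> length q = m} \<noteq> {}"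
  proof -
    have "prob_vec (1 # replicate (m - 1) 0) \<and> length (1 # replicate (m - 1) (0::real)) = m"
      using m0 by (simp add: prob_vec_def sum_list_replicate)
    thus ?thesis by blast
  qed
  have "H p - H qb - \<alpha> \<le> (INF q \<in> {q. prob_vec q \<and> length q = m}. D p q)"
    by (rule cINF_greatest[OF neQ low])
  hence "D p qb \<le> (INF q \<in> {q. prob_vec q \<and> length q = m}. D p q) + \<alpha>" using up by linarith
  thus ?thesis using alpha_bounds(2) unfolding qb_def \<alpha>_def by simp
qed

end
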